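(* Let $\Sigma=[\sigma_{hk}]$ be a $p\times p$ Hermitian positive definite complex matrix and $\alpha=(n_1,m_1,\dots,n_p,m_p)\in\mathbb Z_{\ge0}^{2p}$, with $N=\{h:n_h\neq0\}$, $M=\{k:m_k\neq0\}$, $S^N_h=\{k\in M:\sigma_{hk}\neq0\}$ for $h\in N$. For each $h\in N$ with $S^N_h\neq\emptyset$ let $A_h$ be the $2p\times\#S^N_h$ matrix with columns $a_{(hk)}=\sigma_{hk}(m_k e_h+n_h e_{p+k})$, $k\in S^N_h$, and let $t_h=(\nu(\alpha^-_{hk}))_{k\in S^N_h}$, where $\alpha^-_{hk}=\alpha-\epsilon_{2h-1}-\epsilon_{2k}$. Let $A=[A_h]_{h\in N,\,S^N_h\neq\emptyset}$ (blocks placed side by side), $t$ the column vector obtained by stacking the $t_h$ in the same order, and $b=\sum_{h\in N}e_h+\sum_{k\in M}e_{p+k}$. Then $$A\,t=\nu(\alpha)\,b .$$ Moreover, for each $h\notin N$ the $h$-th row of $A$ is null and $b_h=0$, and for each $k\notin M$ the $(p+k)$-th row of $A$ is null and $b_{p+k}=0$.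
   Context: $\mathcal{CN}_p(\Sigma)$ has density $\varphi(z;\Sigma)=\frac{1}{\pi^p\det\Sigma}\exp(-z^*\Sigma^{-1}z)$ on $\mathbb C^p\cong\mathbb R^{2p}$; $\nu(\alpha)=\int_{\mathbb C^p}\prod_{j=1}^p z_j^{n_j}\bar z_j^{m_j}\varphi(z;\Sigma)\,dz$. Here $e_1,\dots,e_{2p}$ denotes the canonical basis of the space of $2p$-vectors used to build $A$ and $b$, and $\epsilon_1,\dots,\epsilon_{2p}$ the canonical basis of $\mathbb Z^{2p}$ in the multi-index notation (the paper uses the same symbol $e_j$ for both). *)

theory Defs
  imports "HOL-Analysis.Analysis"
begin

text \<open>The multi-index alpha = (n_1,m_1,...,n_p,m_p) is represented by the pair of
  functions n m :: 'p => nat.  Vectors in C^{2p} are functions on \<open>'p + 'p\<close>: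
  \<open>Inl h\<close> is coordinate h, \<open>Inr k\<close> is coordinate p+k.\<close>

definition herm_quad :: "complex ^ 'p ^ 'p \<Rightarrow> complex ^ 'p \<Rightarrow> complex" where
  "herm_quad S z = (\<Sum>i\<in>UNIV. \<Sum>j\<in>UNIV. cnj (z $ i) * S $ i $ j * z $ j)"

definition hermitian_pd :: "complex ^ 'p ^ 'p \<Rightarrow> bool" where
  "hermitian_pd S \<longleftrightarrow> (\<forall>i j. S $ i $ j = cnj (S $ j $ i)) \<and>
     (\<forall>z. z \<noteq> 0 \<longrightarrow> herm_quad S z \<in> \<real> \<and> Re (herm_quad S z) > 0)"

definition cgauss_density :: "complex ^ 'p ^ 'p \<Rightarrow> complex ^ 'p \<Rightarrow> complex" where
  "cgauss_density S z =
     exp (- herm_quad (matrix_inv S) z) / (complex_of_real (pi ^ CARD('p)) * det S)"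

definition nu :: "complex ^ 'p ^ 'p \<Rightarrow> ('p \<Rightarrow> nat) \<Rightarrow> ('p \<Rightarrow> nat) \<Rightarrow> complex" where
  "nu S n m = (LINT z|lborel. (\<Prod>j\<in>UNIV. (z $ j) ^ n j * (cnj (z $ j)) ^ m j) * cgauss_density S z)"

definition Nset :: "('p \<Rightarrow> nat) \<Rightarrow> 'p set" where
  "Nset n = {h. n h \<noteq> 0}"

definition Mset :: "('p \<Rightarrow> nat) \<Rightarrow> 'p set" where
  "Mset m = {k. m k \<noteq> 0}"

definition SN :: "complex ^ 'p ^ 'p \<Rightarrow> ('p \<Rightarrow> nat) \<Rightarrow> 'p \<Rightarrow> 'p set" where
  "SN S m h = {k \<in> Mset m. S $ h $ k \<noteq> 0}"

text \<open>Index set of the columns of A: pairs (h,k) with h in N and k in S^N_h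
  (the blocks A_h with S^N_h empty contribute no columns).\<close>
definition colset :: "complex ^ 'p ^ 'p \<Rightarrow> ('p \<Rightarrow> nat) \<Rightarrow> ('p \<Rightarrow> nat) \<Rightarrow> ('p \<times> 'p) set" where
  "colset S n m = {(h, k). h \<in> Nset n \<and> k \<in> SN S m h}"

definition Amat :: "complex ^ 'p ^ 'p \<Rightarrow> ('p \<Rightarrow> nat) \<Rightarrow> ('p \<Rightarrow> nat) \<Rightarrow> 'p + 'p \<Rightarrow> 'p \<times> 'p \<Rightarrow> complex" where
  "Amat S n m r c = (case c of (h, k) \<Rightarrow>
     S $ h $ k * ((if r = Inl h then of_nat (m k) else 0) + (if r = Inr k then of_nat (n h) else 0)))"

text \<open>alpha^-_{hk} = alpha - eps_{2h-1} - eps_{2k}, i.e. n_h and m_k decreased by one.\<close>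
definition tvec :: "complex ^ 'p ^ 'p \<Rightarrow> ('p \<Rightarrow> nat) \<Rightarrow> ('p \<Rightarrow> nat) \<Rightarrow> 'p \<times> 'p \<Rightarrow> complex" where
  "tvec S n m c = (case c of (h, k) \<Rightarrow> nu S (n(h := n h - 1)) (m(k := m k - 1)))"

definition bvec :: "('p \<Rightarrow> nat) \<Rightarrow> ('p \<Rightarrow> nat) \<Rightarrow> 'p + 'p \<Rightarrow> complex" where
  "bvec n m r = (case r of Inl h \<Rightarrow> (if h \<in> Nset n then 1 else 0)
                          | Inr k \<Rightarrow> (if k \<in> Mset m then 1 else 0))"

end

theory Submission
  imports Defs "HOL-Probability.Distributions"
begin

lemma ibp_zero:
  fixes g g' :: "'a::euclidean_space \<Rightarrow> complex" and v :: 'a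
  assumes deriv: "\<And>z. ((\<lambda>t. g (z + t *\<^sub>R v)) has_vector_derivative g' z) (at 0)"
    and cont: "continuous_on UNIV g'"
    and ig: "integrable lborel g" and ig': "integrable lborel g'"
  shows "integral\<^sup>L lborel g' = 0"
proof -
  have g'm: "g' \<in> borel_measurable borel" using cont by (rule borel_measurable_continuous_onI)
  have gm: "g \<in> borel_measurable borel" using ig by auto
  have transl_int: "integrable lborel (\<lambda>z. f (z + w))" "integral\<^sup>L lborel (\<lambda>z. f (z + w)) = integral\<^sup>L lborel f"
    if "integrable lborel f" for f :: "'a \<Rightarrow> complex" and w
  proof -
    have fm: "f \<in> borel_measurable borel" using that by auto
    have "integrable (distr lborel borel ((+) w)) f" using that by (simp add: lborel_distr_plus)
    then show "integrable lborel (\<lambda>z. f (z + w))"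
      by (subst (asm) integrable_distr_eq) (auto simp: add.commute fm)
    have "integral\<^sup>L lborel f = integral\<^sup>L (distr lborel borel ((+) w)) f" by (simp add: lborel_distr_plus)
    also have "\<dots> = integral\<^sup>L lborel (\<lambda>z. f (w + z))" by (rule integral_distr) (auto simp: fm)
    finally show "integral\<^sup>L lborel (\<lambda>z. f (z + w)) = integral\<^sup>L lborel f" by (simp add: add.commute)
  qed
  have dert: "((\<lambda>s. g (z + s *\<^sub>R v)) has_vector_derivative g' (z + t *\<^sub>R v)) (at t)" for z t
  proof -
    have "((\<lambda>u. g ((z + t *\<^sub>R v) + u *\<^sub>R v)) \<circ> (\<lambda>s. s - t) has_vector_derivative (1 *\<^sub>R g' (z + t *\<^sub>R v))) (at t)"
      apply (rule vector_diff_chain_at)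
       apply (auto intro!: derivative_eq_intros)
      using deriv[of "z + t *\<^sub>R v"] by simp
    moreover have "(\<lambda>u. g ((z + t *\<^sub>R v) + u *\<^sub>R v)) \<circ> (\<lambda>s. s - t) = (\<lambda>s. g (z + s *\<^sub>R v))"
      by (auto simp: o_def algebra_simps)
    ultimately show ?thesis by simp
  qed
  have contl: "continuous_on S (\<lambda>s. g' (z + s *\<^sub>R v))" for z S
    by (rule continuous_on_compose2[OF cont]) (auto intro!: continuous_intros)
  have ftc: "(LINT s:{0..1}|lborel. g' (z + s *\<^sub>R v)) = g (z + v) - g z" for z
  proof -
    have si: "set_integrable lborel {0..1::real} (\<lambda>s. g' (z + s *\<^sub>R v))"
      unfolding set_integrable_def by (rule borel_integrable_compact) (auto intro: contl)
    have "((\<lambda>s. g' (z + s *\<^sub>R v)) has_integral (g (z + 1 *\<^sub>R v) - g (z + 0 *\<^sub>R v))) {0..1}"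
      by (rule fundamental_theorem_of_calculus) (auto intro: has_vector_derivative_at_within dert)
    then show ?thesis using set_borel_integral_eq_integral(2)[OF si] by (simp add: integral_unique)
  qed
  define F where "F = (\<lambda>(s::real) z. indicator {0..1} s *\<^sub>R g' (z + s *\<^sub>R v))"
  have Fm: "case_prod F \<in> borel_measurable (lborel \<Otimes>\<^sub>M lborel)"
    unfolding F_def using g'm by measurable
  have normF: "(\<integral>z. norm (F s z) \<partial>lborel) = indicator {0..1} s * (\<integral>z. norm (g' z) \<partial>lborel)" for s
    using transl_int(2)[of "\<lambda>z. complex_of_real (norm (g' z))" "s *\<^sub>R v"] ig'
    by (simp add: F_def)
  have Fint: "integrable (lborel \<Otimes>\<^sub>M lborel) (case_prod F)"
  proof (rule lborel_pair.Fubini_integrable[OF Fm])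
    show "integrable lborel (\<lambda>s. \<integral>z. norm (case_prod F (s, z)) \<partial>lborel)"
      using normF by simp
    show "AE s in lborel. integrable lborel (\<lambda>z. case_prod F (s, z))"
      using transl_int(1)[OF ig'] by (simp add: F_def)
  qed
  have e1: "(\<integral>z. (\<integral>s. F s z \<partial>lborel) \<partial>lborel) = (\<integral>s. (\<integral>z. F s z \<partial>lborel) \<partial>lborel)"
    by (rule lborel_pair.Fubini_integral[OF Fint])
  have e2: "(\<integral>z. (\<integral>s. F s z \<partial>lborel) \<partial>lborel) = (\<integral>z. g (z + v) - g z \<partial>lborel)"
    using ftc by (simp add: F_def set_lebesgue_integral_def)
  have e3: "(\<integral>z. g (z + v) - g z \<partial>lborel) = 0"
    using transl_int[OF ig, of v] ig by simp
  have e4: "(\<integral>s. (\<integral>z. F s z \<partial>lborel) \<partial>lborel) = integral\<^sup>L lborel g'"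
    using transl_int(2)[OF ig'] by (simp add: F_def)
  show ?thesis using e1 e2 e3 e4 by simp
qed
lemma gauss1_integrable:
  fixes c :: real assumes "c > 0"
  shows "integrable lborel (\<lambda>x::real. exp (- c * x\<^sup>2))"
proof -
  define \<sigma> where "\<sigma> = sqrt (1 / (2 * c))"
  have s2: "\<sigma>\<^sup>2 = 1 / (2 * c)" using assms by (simp add: \<sigma>_def)
  have sp: "\<sigma> > 0" using assms by (simp add: \<sigma>_def)
  have "integrable lborel (\<lambda>x. sqrt (2 * pi * \<sigma>\<^sup>2) * normal_density 0 \<sigma> x)"
    using sp by (intro integrable_mult_right integrable_normal_density)
  moreover have "sqrt (2 * pi * \<sigma>\<^sup>2) * normal_density 0 \<sigma> x = exp (- c * x\<^sup>2)" for x
    using sp assms by (simp add: normal_density_def s2 field_simps)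
  ultimately show ?thesis by simp
qed

lemma gauss_integrable:
  fixes c :: real assumes "c > 0"
  shows "integrable lborel (\<lambda>x::'a::euclidean_space. exp (- c * (norm x)\<^sup>2))"
proof -
  interpret product_sigma_finite "\<lambda>_::'a. lborel::real measure" by standard
  define T where "T = (\<lambda>f. \<Sum>b\<in>(Basis::'a set). f b *\<^sub>R b)"
  have Tm: "T \<in> measurable (\<Pi>\<^sub>M b\<in>(Basis::'a set). lborel) borel" unfolding T_def by measurable
  have nT: "(norm (T f))\<^sup>2 = (\<Sum>b\<in>Basis. (f b)\<^sup>2)" for f
  proof -
    have "(norm (T f))\<^sup>2 = T f \<bullet> T f" by (simp add: power2_norm_eq_inner)
    also have "\<dots> = (\<Sum>b\<in>Basis. (T f \<bullet> b) * (T f \<bullet> b))" by (rule euclidean_inner)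
    also have "\<dots> = (\<Sum>b\<in>Basis. (f b)\<^sup>2)"
      by (intro sum.cong refl) (simp add: T_def inner_sum_left inner_Basis if_distrib sum.delta power2_eq_square cong: if_cong)
    finally show ?thesis .
  qed
  have "integrable (\<Pi>\<^sub>M b\<in>(Basis::'a set). lborel) (\<lambda>f. \<Prod>b\<in>Basis. (\<lambda>_ t. exp (- c * t\<^sup>2)) b (f b))"
    using product_integrable_prod[where I=Basis and f="\<lambda>_ t. exp (- c * t\<^sup>2)"] gauss1_integrable[OF assms] by simp
  then have "integrable (\<Pi>\<^sub>M b\<in>(Basis::'a set). lborel) (\<lambda>f. \<Prod>b\<in>Basis. exp (- c * (f b)\<^sup>2))"
    by simp
  moreover have "(\<Prod>b\<in>Basis. exp (- c * (f b)\<^sup>2)) = exp (- c * (norm (T f))\<^sup>2)" for f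
    by (simp add: nT exp_sum[symmetric] sum_distrib_left sum_negf)
  ultimately have "integrable (\<Pi>\<^sub>M b\<in>(Basis::'a set). lborel) (\<lambda>f. exp (- c * (norm (T f))\<^sup>2))" by simp
  then have "integrable (distr (\<Pi>\<^sub>M b\<in>(Basis::'a set). lborel) borel T) (\<lambda>x::'a. exp (- c * (norm x)\<^sup>2))"
    by (subst integrable_distr_eq[OF Tm]) auto
  then show ?thesis unfolding T_def by (simp add: lborel_eq[symmetric])
qed
lemma pow_le_fact_exp:
  fixes y :: real assumes "y \<ge> 0"
  shows "y ^ k \<le> fact k * exp y"
proof -
  have "(\<Sum>n\<in>{k}. y ^ n /\<^sub>R fact n) \<le> (\<Sum>n. y ^ n /\<^sub>R fact n)"
    by (rule sum_le_suminf) (use assms summable_exp_generic[of y] in auto)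
  then have "y ^ k / fact k \<le> exp y" by (simp add: exp_def divide_inverse_commute)
  then show ?thesis by (simp add: field_simps)
qed
lemma herm_quad_mv: "herm_quad A z = (\<Sum>i\<in>UNIV. cnj (z $ i) * (A *v z) $ i)"
  by (simp add: herm_quad_def matrix_vector_mult_def sum_distrib_left mult.assoc)

lemma herm_quad_scale: "herm_quad A (r *\<^sub>R z) = of_real (r\<^sup>2) * herm_quad A z"
  unfolding herm_quad_def vector_scaleR_component
  by (simp add: scaleR_conv_of_real sum_distrib_left power2_eq_square mult_ac)

lemma continuous_herm_quad: "continuous_on UNIV (\<lambda>z. herm_quad A z)"
  unfolding herm_quad_def by (intro continuous_intros)

lemma pd_lower_bound:
  fixes A :: "complex ^ 'p ^ 'p"
  assumes pos: "\<And>z. z \<noteq> 0 \<Longrightarrow> Re (herm_quad A z) > 0"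
  shows "\<exists>c>0. \<forall>z. Re (herm_quad A z) \<ge> c * (norm z)\<^sup>2"
proof -
  obtain i :: 'p where True by simp
  have ne: "sphere (0::complex^'p) 1 \<noteq> {}"
    by simp
  have co: "continuous_on (sphere 0 1) (\<lambda>z. Re (herm_quad A z))"
    by (rule continuous_on_subset[of UNIV]) (auto intro!: continuous_intros continuous_on_compose2[OF continuous_herm_quad])
  obtain x0 where x0: "x0 \<in> sphere 0 1" "\<And>y. y \<in> sphere 0 1 \<Longrightarrow> Re (herm_quad A x0) \<le> Re (herm_quad A y)"
    using continuous_attains_inf[OF compact_sphere ne co] by blast
  define c where "c = Re (herm_quad A x0)"
  have "x0 \<noteq> 0" using x0(1) by auto
  then have cpos: "c > 0" using pos[of x0] by (auto simp: c_def)
  have "Re (herm_quad A z) \<ge> c * (norm z)\<^sup>2" for z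
  proof (cases "z = 0")
    case True then show ?thesis by (simp add: herm_quad_def)
  next
    case False
    define u where "u = (1 / norm z) *\<^sub>R z"
    have u: "u \<in> sphere 0 1" using False by (simp add: u_def)
    have zu: "z = norm z *\<^sub>R u" using False by (simp add: u_def)
    have "Re (herm_quad A z) = (norm z)\<^sup>2 * Re (herm_quad A u)"
      by (subst zu, subst herm_quad_scale) simp
    also have "\<dots> \<ge> (norm z)\<^sup>2 * c" using x0(2)[OF u] by (simp add: c_def mult_left_mono)
    finally show ?thesis by (simp add: mult.commute)
  qed
  then show ?thesis using cpos by blast
qed

lemma inv_facts:
  fixes S :: "complex ^ 'p ^ 'p"
  assumes "hermitian_pd S"
  shows "S ** matrix_inv S = mat 1" "matrix_inv S ** S = mat 1"
    and "\<And>z. herm_quad (matrix_inv S) z = herm_quad S (matrix_inv S *v z)"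
    and "\<And>z. z \<noteq> 0 \<Longrightarrow> Re (herm_quad (matrix_inv S) z) > 0"
proof -
  have herm: "\<And>i j. S $ i $ j = cnj (S $ j $ i)" and pd: "\<And>z. z \<noteq> 0 \<Longrightarrow> Re (herm_quad S z) > 0"
    using assms unfolding hermitian_pd_def by blast+
  have herm': "\<And>i j. cnj (S $ i $ j) = S $ j $ i" by (metis herm complex_cnj_cnj)
  have "\<forall>x. S *v x = 0 \<longrightarrow> x = 0"
  proof (intro allI impI)
    fix x assume "S *v x = 0"
    then have "herm_quad S x = 0" by (simp add: herm_quad_mv)
    then show "x = 0" using pd[of x] by force
  qed
  then have "invertible S" by (simp add: invertible_left_inverse matrix_left_invertible_ker)
  then obtain A where "S ** A = mat 1 \<and> A ** S = mat 1" by (auto simp: invertible_def)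
  then have inv: "S ** matrix_inv S = mat 1 \<and> matrix_inv S ** S = mat 1"
    unfolding matrix_inv_def by (rule someI)
  then show SQ: "S ** matrix_inv S = mat 1" and QS: "matrix_inv S ** S = mat 1" by auto
  define Q where "Q = matrix_inv S"
  have SQz: "S *v (Q *v z) = z" for z
    using SQ by (simp add: Q_def matrix_vector_mul_assoc)
  show hq: "herm_quad Q z = herm_quad S (Q *v z)" for z
  proof -
    define w where "w = Q *v z"
    have zw: "z = S *v w" using SQz by (simp add: w_def)
    have "herm_quad Q z = (\<Sum>i\<in>UNIV. cnj (z $ i) * w $ i)" by (simp add: herm_quad_mv w_def)
    also have "\<dots> = (\<Sum>i\<in>UNIV. \<Sum>k\<in>UNIV. cnj (w $ k) * S $ k $ i * w $ i)"
      by (simp add: zw matrix_vector_mult_def sum_distrib_right sum_distrib_left herm' mult_ac)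
    also have "\<dots> = herm_quad S w"
      unfolding herm_quad_def by (rule sum.swap)
    finally show ?thesis by (simp add: w_def)
  qed
  show "Re (herm_quad Q z) > 0" if "z \<noteq> 0" for z
  proof -
    have "Q *v z \<noteq> 0" using SQz[of z] that by auto
    then show ?thesis using pd hq by simp
  qed
qed
definition mon :: "('p::finite \<Rightarrow> nat) \<Rightarrow> ('p \<Rightarrow> nat) \<Rightarrow> complex ^ 'p \<Rightarrow> complex" where
  "mon a b z = (\<Prod>j\<in>UNIV. (z $ j) ^ a j * (cnj (z $ j)) ^ b j)"

definition Lf :: "complex ^ 'p ^ 'p \<Rightarrow> 'p \<Rightarrow> complex ^ 'p \<Rightarrow> complex" where
  "Lf Q i z = (\<Sum>k\<in>UNIV. Q $ i $ k * z $ k)"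
definition Rf :: "complex ^ 'p ^ 'p \<Rightarrow> 'p \<Rightarrow> complex ^ 'p \<Rightarrow> complex" where
  "Rf Q i z = (\<Sum>k\<in>UNIV. cnj (z $ k) * Q $ k $ i)"

definition offP :: "('p::finite \<Rightarrow> nat) \<Rightarrow> ('p \<Rightarrow> nat) \<Rightarrow> 'p \<Rightarrow> complex ^ 'p \<Rightarrow> complex" where
  "offP a b i z = (\<Prod>j\<in>UNIV-{i}. (z $ j) ^ a j * (cnj (z $ j)) ^ b j)"

lemma mon_split: "mon a b z = (z $ i) ^ a i * (cnj (z $ i)) ^ b i * offP a b i z"
  unfolding mon_def offP_def by (simp add: prod.remove[of UNIV i])

lemma offP_upd: "offP (a(i := k)) (b(i := l)) i z = offP a b i z" "offP (a(i := k)) b i z = offP a b i z"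
  "offP a (b(i := l)) i z = offP a b i z"
  unfolding offP_def by (auto intro!: prod.cong)

lemma offP_shift: "offP a b i (z + t *\<^sub>R axis i c) = offP a b i z"
  unfolding offP_def by (auto intro!: prod.cong simp: axis_def)

lemma herm_quad_shift:
  "herm_quad Q (z + t *\<^sub>R axis i c) =
     herm_quad Q z + of_real t * (cnj c * Lf Q i z + c * Rf Q i z) + (of_real t)\<^sup>2 * (cnj c * c * Q $ i $ i)"
proof -
  define d where "d = (\<lambda>j. if j = i then of_real t * c else 0)"
  have comp: "(z + t *\<^sub>R axis i c) $ j = z $ j + d j" for j
    by (simp only: vector_add_component vector_scaleR_component) (simp add: d_def axis_def scaleR_conv_of_real)
  have sd: "(\<Sum>j\<in>UNIV. X j * d j) = X i * (of_real t * c)" for X :: "'a \<Rightarrow> complex"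
  proof -
    have "X j * d j = (if j = i then X i * (of_real t * c) else 0)" for j by (simp add: d_def)
    then show ?thesis by simp
  qed
  have sd': "(\<Sum>j\<in>UNIV. cnj (d j) * X j) = (of_real t * cnj c) * X i" for X :: "'a \<Rightarrow> complex"
  proof -
    have "cnj (d j) * X j = (if j = i then (of_real t * cnj c) * X i else 0)" for j by (simp add: d_def)
    then show ?thesis by simp
  qed
  have "herm_quad Q (z + t *\<^sub>R axis i c) = herm_quad Q z + (\<Sum>a\<in>UNIV. \<Sum>b\<in>UNIV. (cnj (z $ a) * Q $ a $ b) * d b)
      + (\<Sum>a\<in>UNIV. cnj (d a) * (\<Sum>b\<in>UNIV. Q $ a $ b * z $ b)) + (\<Sum>a\<in>UNIV. cnj (d a) * (\<Sum>b\<in>UNIV. Q $ a $ b * d b))"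
    unfolding herm_quad_def comp by (simp add: algebra_simps sum.distrib sum_distrib_left)
  also have "\<dots> = herm_quad Q z + (\<Sum>a\<in>UNIV. cnj (z $ a) * Q $ a $ i * (of_real t * c))
      + (of_real t * cnj c) * (\<Sum>b\<in>UNIV. Q $ i $ b * z $ b) + (of_real t * cnj c) * (Q $ i $ i * (of_real t * c))"
    by (simp only: sd sd')
  also have "\<dots> = herm_quad Q z + of_real t * (cnj c * Lf Q i z + c * Rf Q i z) + (of_real t)\<^sup>2 * (cnj c * c * Q $ i $ i)"
    by (simp add: sum_distrib_left[symmetric] sum_distrib_right[symmetric] Lf_def Rf_def power2_eq_square algebra_simps)
  finally show ?thesis .
qed

lemma deriv_dir:
  fixes Q :: "complex ^ 'p ^ 'p"
  shows "((\<lambda>t. mon a b (z + t *\<^sub>R axis i c) * exp (- herm_quad Q (z + t *\<^sub>R axis i c))) has_vector_derivative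
     exp (- herm_quad Q z) * (of_nat (a i) * c * mon (a(i := a i - 1)) b z + of_nat (b i) * cnj c * mon a (b(i := b i - 1)) z
        - mon a b z * (cnj c * Lf Q i z + c * Rf Q i z))) (at 0)"
proof -
  define \<alpha> where "\<alpha> = z $ i"
  define P where "P = offP a b i z"
  define \<beta> where "\<beta> = cnj c * Lf Q i z + c * Rf Q i z"
  define \<gamma> where "\<gamma> = cnj c * c * Q $ i $ i"
  define q0 where "q0 = herm_quad Q z"
  define \<psi> where "\<psi> = (\<lambda>w. (\<alpha> + w * c) ^ a i * (cnj \<alpha> + w * cnj c) ^ b i * P * exp (- (q0 + w * \<beta> + w\<^sup>2 * \<gamma>)))"
  have eq: "mon a b (z + t *\<^sub>R axis i c) * exp (- herm_quad Q (z + t *\<^sub>R axis i c)) = \<psi> (of_real t)" for t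
  proof -
    have "(z + t *\<^sub>R axis i c) $ i = \<alpha> + of_real t * c"
      by (simp only: vector_add_component vector_scaleR_component) (simp add: \<alpha>_def axis_def scaleR_conv_of_real)
    then show ?thesis
      unfolding \<psi>_def
      by (subst mon_split[of _ _ _ i]) (simp add: offP_shift herm_quad_shift P_def \<beta>_def \<gamma>_def q0_def)
  qed
  have "(\<psi> has_field_derivative
      exp (- q0) * (of_nat (a i) * c * \<alpha> ^ (a i - 1) * cnj \<alpha> ^ b i * P
        + of_nat (b i) * cnj c * \<alpha> ^ a i * cnj \<alpha> ^ (b i - 1) * P - \<alpha> ^ a i * cnj \<alpha> ^ b i * P * \<beta>)) (at (of_real 0))"
    unfolding \<psi>_def
    apply (rule derivative_eq_intros refl)+
    apply (simp add: algebra_simps)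
    done
  from has_vector_derivative_real_field[OF this, of UNIV]
  have "((\<lambda>t. mon a b (z + t *\<^sub>R axis i c) * exp (- herm_quad Q (z + t *\<^sub>R axis i c))) has_vector_derivative
      exp (- q0) * (of_nat (a i) * c * \<alpha> ^ (a i - 1) * cnj \<alpha> ^ b i * P
        + of_nat (b i) * cnj c * \<alpha> ^ a i * cnj \<alpha> ^ (b i - 1) * P - \<alpha> ^ a i * cnj \<alpha> ^ b i * P * \<beta>)) (at 0)"
    by (simp add: eq)
  moreover have "mon (a(i := a i - 1)) b z = \<alpha> ^ (a i - 1) * cnj \<alpha> ^ b i * P"
    by (subst mon_split[of _ _ _ i]) (simp add: offP_upd \<alpha>_def P_def)
  moreover have "mon a (b(i := b i - 1)) z = \<alpha> ^ a i * cnj \<alpha> ^ (b i - 1) * P"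
    by (subst mon_split[of _ _ _ i]) (simp add: offP_upd \<alpha>_def P_def)
  moreover have "mon a b z = \<alpha> ^ a i * cnj \<alpha> ^ b i * P"
    by (subst mon_split[of _ _ _ i]) (simp add: \<alpha>_def P_def)
  ultimately show ?thesis
    by (simp add: q0_def \<beta>_def algebra_simps)
qed
lemma continuous_mon: "continuous_on UNIV (mon a b)"
  unfolding mon_def by (intro continuous_intros)

lemma norm_mon: "norm (mon a b z) \<le> norm z ^ (\<Sum>j\<in>UNIV. a j + b j)"
proof -
  have "norm (mon a b z) = (\<Prod>j\<in>UNIV. norm (z $ j) ^ (a j + b j))"
    by (simp add: mon_def prod_norm[symmetric] norm_mult norm_power power_add)
  also have "\<dots> \<le> (\<Prod>j\<in>UNIV. norm z ^ (a j + b j))"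
    by (intro prod_mono conjI power_mono Finite_Cartesian_Product.norm_nth_le) auto
  also have "\<dots> = norm z ^ (\<Sum>j\<in>UNIV. a j + b j)" by (simp add: power_sum)
  finally show ?thesis .
qed

lemma mon_E_integrable:
  fixes Q :: "complex ^ 'p ^ 'p"
  assumes lb: "\<And>z. Re (herm_quad Q z) \<ge> c * (norm z)\<^sup>2" and c: "c > 0"
  shows "integrable lborel (\<lambda>z. mon a b z * exp (- herm_quad Q z))"
proof -
  define d where "d = (\<Sum>j\<in>UNIV. a j + b j)"
  define K where "K = fact d * (2 / c) ^ d"
  have bound: "norm (mon a b z * exp (- herm_quad Q z)) \<le>
      exp (- c * (norm z)\<^sup>2) + K * exp (- (c / 2) * (norm z)\<^sup>2)" for z
  proof -
    let ?n = "norm z"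
    have e: "norm (exp (- herm_quad Q z)) \<le> exp (- c * ?n\<^sup>2)"
      using lb[of z] by (simp add: norm_exp_eq_Re)
    have p1: "?n ^ d \<le> 1 + (?n\<^sup>2) ^ d"
    proof (cases "?n \<le> 1")
      case True then have "?n ^ d \<le> 1" by (simp add: power_le_one)
      moreover have "0 \<le> (?n\<^sup>2) ^ d" by simp
      ultimately show ?thesis by linarith
    next
      case False then have "?n ^ d \<le> (?n\<^sup>2) ^ d"
        by (intro power_mono) (auto simp: power2_eq_square mult_le_cancel_left1)
      then show ?thesis by simp
    qed
    have p2: "(?n\<^sup>2) ^ d \<le> K * exp ((c / 2) * ?n\<^sup>2)"
    proof -
      have "(?n\<^sup>2) ^ d = (2 / c) ^ d * ((c / 2) * ?n\<^sup>2) ^ d"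
        using c by (simp add: power_mult_distrib[symmetric])
      also have "\<dots> \<le> (2 / c) ^ d * (fact d * exp ((c / 2) * ?n\<^sup>2))"
        using c by (intro mult_left_mono pow_le_fact_exp) auto
      finally show ?thesis by (simp add: K_def mult_ac)
    qed
    have "norm (mon a b z * exp (- herm_quad Q z)) \<le> ?n ^ d * exp (- c * ?n\<^sup>2)"
      unfolding norm_mult d_def by (intro mult_mono norm_mon e) auto
    also have "\<dots> \<le> (1 + K * exp ((c / 2) * ?n\<^sup>2)) * exp (- c * ?n\<^sup>2)"
      using p1 p2 by (intro mult_right_mono) auto
    also have "\<dots> = exp (- c * ?n\<^sup>2) + K * exp (- (c / 2) * ?n\<^sup>2)"
      by (simp add: algebra_simps exp_add[symmetric])
    finally show ?thesis .
  qed
  have "integrable lborel (\<lambda>z::complex^'p. exp (- c * (norm z)\<^sup>2) + K * exp (- (c / 2) * (norm z)\<^sup>2))"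
    using c by (intro Bochner_Integration.integrable_add integrable_mult_right gauss_integrable) auto
  then show ?thesis
  proof (rule Bochner_Integration.integrable_bound)
    show "(\<lambda>z. mon a b z * exp (- herm_quad Q z)) \<in> borel_measurable lborel"
      by (simp, intro borel_measurable_continuous_onI continuous_intros continuous_on_compose2[OF continuous_mon]
          continuous_on_compose2[OF continuous_herm_quad]) auto
    show "AE x in lborel. norm (mon a b x * exp (- herm_quad Q x))
         \<le> norm (exp (- c * (norm x)\<^sup>2) + K * exp (- (c / 2) * (norm x)\<^sup>2))"
    proof (intro AE_I2)
      fix x :: "complex ^ 'p"
      show "norm (mon a b x * exp (- herm_quad Q x))
         \<le> norm (exp (- c * (norm x)\<^sup>2) + K * exp (- (c / 2) * (norm x)\<^sup>2))"
        using bound[of x] abs_ge_self order_trans by (auto simp del: norm_exp_eq_Re)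
    qed
  qed
qed


lemma mon_mult_z: "mon a b z * z $ k = mon (a(k := Suc (a k))) b z"
  by (simp add: mon_split[where i=k] offP_upd)

lemma mon_mult_cz: "mon a b z * cnj (z $ k) = mon a (b(k := Suc (b k))) z"
  by (simp add: mon_split[where i=k] offP_upd)

lemma continuous_Lf: "continuous_on UNIV (Lf Q i)"
  unfolding Lf_def by (intro continuous_intros)

lemma continuous_Rf: "continuous_on UNIV (Rf Q i)"
  unfolding Rf_def by (intro continuous_intros)


lemma mon_E_L_integrable:
  fixes Q :: "complex ^ 'p ^ 'p"
  assumes lb: "\<And>z. Re (herm_quad Q z) \<ge> c * (norm z)\<^sup>2" and c: "c > 0"
  shows "integrable lborel (\<lambda>z. mon a b z * exp (- herm_quad Q z) * Lf Q i z)"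
proof -
  have Leq: "mon a b z * exp (- herm_quad Q z) * Lf Q i z = (\<Sum>k\<in>UNIV. Q $ i $ k * (mon (a(k := Suc (a k))) b z * exp (- herm_quad Q z)))" for z
    by (simp add: Lf_def sum_distrib_left mon_mult_z[symmetric] mult_ac)
  show ?thesis
    unfolding Leq by (intro Bochner_Integration.integrable_sum Bochner_Integration.integrable_mult_right mon_E_integrable[OF lb c])
qed

lemma mon_E_R_integrable:
  fixes Q :: "complex ^ 'p ^ 'p"
  assumes lb: "\<And>z. Re (herm_quad Q z) \<ge> c * (norm z)\<^sup>2" and c: "c > 0"
  shows "integrable lborel (\<lambda>z. mon a b z * exp (- herm_quad Q z) * Rf Q i z)"
proof -
  have Req: "mon a b z * exp (- herm_quad Q z) * Rf Q i z = (\<Sum>k\<in>UNIV. Q $ k $ i * (mon a (b(k := Suc (b k))) z * exp (- herm_quad Q z)))" for z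
    by (simp add: Rf_def sum_distrib_left mon_mult_cz[symmetric] mult_ac)
  show ?thesis
    unfolding Req by (intro Bochner_Integration.integrable_sum Bochner_Integration.integrable_mult_right mon_E_integrable[OF lb c])
qed

lemma ibp_LR:
  fixes Q :: "complex ^ 'p ^ 'p"
  assumes lb: "\<And>z. Re (herm_quad Q z) \<ge> c * (norm z)\<^sup>2" and c: "c > 0"
  shows "integral\<^sup>L lborel (\<lambda>z. mon a b z * exp (- herm_quad Q z) * Lf Q i z)
           = of_nat (b i) * integral\<^sup>L lborel (\<lambda>z. mon a (b(i := b i - 1)) z * exp (- herm_quad Q z))"
    and "integral\<^sup>L lborel (\<lambda>z. mon a b z * exp (- herm_quad Q z) * Rf Q i z)
           = of_nat (a i) * integral\<^sup>L lborel (\<lambda>z. mon (a(i := a i - 1)) b z * exp (- herm_quad Q z))"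
proof -
  let ?E = "\<lambda>z. exp (- herm_quad Q z)"
  have int: "integrable lborel (\<lambda>z. mon a' b' z * ?E z)" for a' b' by (rule mon_E_integrable[OF lb c])
  have Leq: "mon a b z * ?E z * Lf Q i z = (\<Sum>k\<in>UNIV. Q $ i $ k * (mon (a(k := Suc (a k))) b z * ?E z))" for z
    by (simp add: Lf_def sum_distrib_left mon_mult_z[symmetric] mult_ac)
  have Req: "mon a b z * ?E z * Rf Q i z = (\<Sum>k\<in>UNIV. Q $ k $ i * (mon a (b(k := Suc (b k))) z * ?E z))" for z
    by (simp add: Rf_def sum_distrib_left mon_mult_cz[symmetric] mult_ac)
  have intL: "integrable lborel (\<lambda>z. mon a b z * ?E z * Lf Q i z)"
    unfolding Leq by (intro Bochner_Integration.integrable_sum Bochner_Integration.integrable_mult_right int)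
  have intR: "integrable lborel (\<lambda>z. mon a b z * ?E z * Rf Q i z)"
    unfolding Req by (intro Bochner_Integration.integrable_sum Bochner_Integration.integrable_mult_right int)
  define I1 where "I1 = integral\<^sup>L lborel (\<lambda>z. mon (a(i := a i - 1)) b z * ?E z)"
  define I2 where "I2 = integral\<^sup>L lborel (\<lambda>z. mon a (b(i := b i - 1)) z * ?E z)"
  define JL where "JL = integral\<^sup>L lborel (\<lambda>z. mon a b z * ?E z * Lf Q i z)"
  define JR where "JR = integral\<^sup>L lborel (\<lambda>z. mon a b z * ?E z * Rf Q i z)"
  have key: "of_nat (a i) * c0 * I1 + of_nat (b i) * cnj c0 * I2 - cnj c0 * JL - c0 * JR = 0" for c0
  proof -
    define G where "G = (\<lambda>z. of_nat (a i) * c0 * (mon (a(i := a i - 1)) b z * ?E z)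
        + of_nat (b i) * cnj c0 * (mon a (b(i := b i - 1)) z * ?E z)
        - cnj c0 * (mon a b z * ?E z * Lf Q i z) - c0 * (mon a b z * ?E z * Rf Q i z))"
    have "integral\<^sup>L lborel G = 0"
    proof (rule ibp_zero[where g = "\<lambda>z. mon a b z * ?E z" and v = "axis i c0"])
      show "((\<lambda>t. mon a b (z + t *\<^sub>R axis i c0) * ?E (z + t *\<^sub>R axis i c0)) has_vector_derivative G z) (at 0)" for z
      proof -
        have "G z = exp (- herm_quad Q z) * (of_nat (a i) * c0 * mon (a(i := a i - 1)) b z + of_nat (b i) * cnj c0 * mon a (b(i := b i - 1)) z
          - mon a b z * (cnj c0 * Lf Q i z + c0 * Rf Q i z))"
          by (simp add: G_def algebra_simps)
        then show ?thesis using deriv_dir[of a b z i c0 Q] by simp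
      qed
      show "continuous_on UNIV G"
        unfolding G_def
        by (intro continuous_intros continuous_on_compose2[OF continuous_mon] continuous_on_compose2[OF continuous_herm_quad]
            continuous_on_compose2[OF continuous_Lf] continuous_on_compose2[OF continuous_Rf]) auto
      show "integrable lborel (\<lambda>z. mon a b z * ?E z)" by (rule int)
      show "integrable lborel G"
        unfolding G_def by (intro Bochner_Integration.integrable_diff Bochner_Integration.integrable_add integrable_mult_right int intL intR)
    qed
    moreover have "integral\<^sup>L lborel G = of_nat (a i) * c0 * I1 + of_nat (b i) * cnj c0 * I2 - cnj c0 * JL - c0 * JR"
      unfolding G_def I1_def I2_def JL_def JR_def
      by (simp add: int intL intR)
    ultimately show ?thesis by simp
  qed
  have k1: "of_nat (a i) * I1 + of_nat (b i) * I2 - JL - JR = 0" using key[of 1] by simp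
  have k2: "\<i> * of_nat (a i) * I1 - \<i> * of_nat (b i) * I2 + \<i> * JL - \<i> * JR = 0" using key[of \<i>] by (simp add: algebra_simps)
  have k2': "of_nat (a i) * I1 - of_nat (b i) * I2 + JL - JR = 0"
  proof -
    have "- \<i> * (\<i> * of_nat (a i) * I1 - \<i> * of_nat (b i) * I2 + \<i> * JL - \<i> * JR) = 0" using k2 by simp
    then show ?thesis by (simp add: algebra_simps)
  qed
  have "2 * JL = 2 * (of_nat (b i) * I2)" using k1 k2' by algebra
  then show "integral\<^sup>L lborel (\<lambda>z. mon a b z * exp (- herm_quad Q z) * Lf Q i z)
           = of_nat (b i) * integral\<^sup>L lborel (\<lambda>z. mon a (b(i := b i - 1)) z * exp (- herm_quad Q z))"
    by (simp add: JL_def I2_def)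
  have "2 * JR = 2 * (of_nat (a i) * I1)" using k1 k2' by algebra
  then show "integral\<^sup>L lborel (\<lambda>z. mon a b z * exp (- herm_quad Q z) * Rf Q i z)
           = of_nat (a i) * integral\<^sup>L lborel (\<lambda>z. mon (a(i := a i - 1)) b z * exp (- herm_quad Q z))"
    by (simp add: JR_def I1_def)
qed


lemma sum_colset:
  "(\<Sum>c\<in>colset S n m. F c) = (\<Sum>h\<in>UNIV. \<Sum>k\<in>UNIV. if n h \<noteq> 0 \<and> m k \<noteq> 0 \<and> S $ h $ k \<noteq> 0 then F (h, k) else 0)"
proof -
  have mem: "c \<in> colset S n m \<longleftrightarrow> n (fst c) \<noteq> 0 \<and> m (snd c) \<noteq> 0 \<and> S $ fst c $ snd c \<noteq> 0" for c
    by (cases c) (auto simp: colset_def SN_def Nset_def Mset_def)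
  have "(\<Sum>c\<in>colset S n m. F c) = (\<Sum>c\<in>UNIV. if c \<in> colset S n m then F c else 0)"
    using sum.inter_restrict[of UNIV F "colset S n m"] by simp
  also have "\<dots> = (\<Sum>c\<in>UNIV. if n (fst c) \<noteq> 0 \<and> m (snd c) \<noteq> 0 \<and> S $ fst c $ snd c \<noteq> 0 then F c else 0)"
    by (simp only: mem)
  also have "\<dots> = (\<Sum>c\<in>UNIV \<times> UNIV. if n (fst c) \<noteq> 0 \<and> m (snd c) \<noteq> 0 \<and> S $ fst c $ snd c \<noteq> 0 then F c else 0)"
    by simp
  also have "\<dots> = (\<Sum>h\<in>UNIV. \<Sum>k\<in>UNIV. if n h \<noteq> 0 \<and> m k \<noteq> 0 \<and> S $ h $ k \<noteq> 0 then F (h, k) else 0)"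
    by (subst sum.cartesian_product) (auto simp: case_prod_beta intro!: sum.cong)
  finally show ?thesis .
qed

theorem corollary3p9:
  fixes S :: "complex ^ 'p ^ 'p" and n m :: "'p \<Rightarrow> nat"
  assumes "hermitian_pd S"
  shows "(\<forall>r :: 'p + 'p. (\<Sum>c\<in>colset S n m. Amat S n m r c * tvec S n m c) = nu S n m * bvec n m r)
    \<and> (\<forall>h. h \<notin> Nset n \<longrightarrow> (\<forall>c\<in>colset S n m. Amat S n m (Inl h) c = 0) \<and> bvec n m (Inl h) = 0)
    \<and> (\<forall>k. k \<notin> Mset m \<longrightarrow> (\<forall>c\<in>colset S n m. Amat S n m (Inr k) c = 0) \<and> bvec n m (Inr k) = 0)"
proof -
  define Q where "Q = matrix_inv S"
  note inv = inv_facts[OF assms, folded Q_def]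
  obtain c where c: "c > 0" and lb: "\<And>z. Re (herm_quad Q z) \<ge> c * (norm z)\<^sup>2"
    using pd_lower_bound[of Q] inv(4) by blast
  define K where "K = complex_of_real (pi ^ CARD('p)) * det S"
  define I where "I = (\<lambda>a b. integral\<^sup>L lborel (\<lambda>z. mon a b z * exp (- herm_quad Q z)))"
  have nuI: "nu S a b = I a b / K" for a b
  proof -
    have "nu S a b = integral\<^sup>L lborel (\<lambda>z. mon a b z * exp (- herm_quad Q z) / K)"
      unfolding nu_def cgauss_density_def by (simp add: mon_def Q_def K_def)
    then show ?thesis by (simp add: I_def)
  qed
  have int: "integrable lborel (\<lambda>z. mon a b z * exp (- herm_quad Q z))" for a b
    by (rule mon_E_integrable[OF lb c])
  have intL: "integrable lborel (\<lambda>z. mon a b z * exp (- herm_quad Q z) * Lf Q i z)" for a b i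
    by (rule mon_E_L_integrable[OF lb c])
  have intR: "integrable lborel (\<lambda>z. mon a b z * exp (- herm_quad Q z) * Rf Q i z)" for a b i
    by (rule mon_E_R_integrable[OF lb c])
  have rowL: "I n m = (\<Sum>i\<in>UNIV. S $ h $ i * of_nat (m i) * I (n(h := n h - 1)) (m(i := m i - 1)))"
    if nh: "n h \<noteq> 0" for h
  proof -
    define a where "a = n(h := n h - 1)"
    have an: "a(h := Suc (a h)) = n" using nh by (auto simp: a_def)
    have zh: "z $ h = (\<Sum>i\<in>UNIV. S $ h $ i * Lf Q i z)" for z
    proof -
      have "(S ** Q) *v z = z" using inv(1) by simp
      then have "(S *v (Q *v z)) $ h = z $ h" by (simp add: matrix_vector_mul_assoc)
      then show ?thesis by (simp add: matrix_vector_mult_def Lf_def)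
    qed
    have eq: "mon n m z * exp (- herm_quad Q z) = (\<Sum>i\<in>UNIV. S $ h $ i * (mon a m z * exp (- herm_quad Q z) * Lf Q i z))" for z
    proof -
      have "mon n m z = mon a m z * z $ h" using mon_mult_z[of a m z h] an by simp
      then show ?thesis by (simp add: zh sum_distrib_left mult_ac)
    qed
    have "I n m = (\<Sum>i\<in>UNIV. S $ h $ i * integral\<^sup>L lborel (\<lambda>z. mon a m z * exp (- herm_quad Q z) * Lf Q i z))"
      unfolding I_def eq by (simp add: integral_sum intL)
    also have "\<dots> = (\<Sum>i\<in>UNIV. S $ h $ i * of_nat (m i) * I a (m(i := m i - 1)))"
      by (simp only: ibp_LR(1)[OF lb c]) (simp add: I_def mult.assoc)
    finally show ?thesis by (simp add: a_def)
  qed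
  have rowR: "I n m = (\<Sum>i\<in>UNIV. S $ i $ k * of_nat (n i) * I (n(i := n i - 1)) (m(k := m k - 1)))"
    if mk: "m k \<noteq> 0" for k
  proof -
    define b where "b = m(k := m k - 1)"
    have bm: "b(k := Suc (b k)) = m" using mk by (auto simp: b_def)
    have QS: "(\<Sum>i\<in>UNIV. Q $ a $ i * S $ i $ k) = (if a = k then 1 else 0)" for a
    proof -
      have "(Q ** S) $ a $ k = mat 1 $ a $ k" using inv(2) by simp
      then show ?thesis by (simp add: matrix_matrix_mult_def mat_def)
    qed
    have zk: "cnj (z $ k) = (\<Sum>i\<in>UNIV. Rf Q i z * S $ i $ k)" for z
    proof -
      have "(\<Sum>i\<in>UNIV. Rf Q i z * S $ i $ k) = (\<Sum>i\<in>UNIV. \<Sum>a\<in>UNIV. cnj (z $ a) * (Q $ a $ i * S $ i $ k))"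
        by (simp add: Rf_def sum_distrib_right sum_distrib_left mult_ac)
      also have "\<dots> = (\<Sum>a\<in>UNIV. cnj (z $ a) * (\<Sum>i\<in>UNIV. Q $ a $ i * S $ i $ k))"
        by (subst sum.swap) (simp add: sum_distrib_left)
      also have "\<dots> = (\<Sum>a\<in>UNIV. if a = k then cnj (z $ k) else 0)"
        by (intro sum.cong refl) (simp add: QS)
      also have "\<dots> = cnj (z $ k)" by simp
      finally show ?thesis by simp
    qed
    have eq: "mon n m z * exp (- herm_quad Q z) = (\<Sum>i\<in>UNIV. S $ i $ k * (mon n b z * exp (- herm_quad Q z) * Rf Q i z))" for z
    proof -
      have "mon n m z = mon n b z * cnj (z $ k)" using mon_mult_cz[of n b z k] bm by simp
      then show ?thesis by (simp add: zk sum_distrib_left mult_ac)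
    qed
    have "I n m = (\<Sum>i\<in>UNIV. S $ i $ k * integral\<^sup>L lborel (\<lambda>z. mon n b z * exp (- herm_quad Q z) * Rf Q i z))"
      unfolding I_def eq by (simp add: integral_sum intR)
    also have "\<dots> = (\<Sum>i\<in>UNIV. S $ i $ k * of_nat (n i) * I (n(i := n i - 1)) b)"
      by (simp only: ibp_LR(2)[OF lb c]) (simp add: I_def mult.assoc)
    finally show ?thesis by (simp add: b_def)
  qed
  have part1: "(\<Sum>c\<in>colset S n m. Amat S n m r c * tvec S n m c) = nu S n m * bvec n m r" for r
  proof (cases r)
    case (Inl h)
    show ?thesis
    proof (cases "n h = 0")
      case True
      have "(\<Sum>c\<in>colset S n m. Amat S n m r c * tvec S n m c) = 0"
        using True by (auto simp: Inl colset_def Nset_def Amat_def intro!: sum.neutral)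
      then show ?thesis using True by (simp add: Inl bvec_def Nset_def)
    next
      case False
      have pw: "(\<Sum>k\<in>UNIV. if n h' \<noteq> 0 \<and> m k \<noteq> 0 \<and> S $ h' $ k \<noteq> 0 then Amat S n m r (h', k) * tvec S n m (h', k) else 0)
          = (if h' = h then (\<Sum>k\<in>UNIV. S $ h $ k * of_nat (m k) * nu S (n(h := n h - 1)) (m(k := m k - 1))) else 0)" for h'
      proof (cases "h' = h")
        case True
        then show ?thesis using False by (auto simp: Inl Amat_def tvec_def intro!: sum.cong)
      next
        case hne: False
        then show ?thesis by (auto simp: Inl Amat_def intro!: sum.neutral)
      qed
      have "(\<Sum>c\<in>colset S n m. Amat S n m r c * tvec S n m c) = (\<Sum>k\<in>UNIV. S $ h $ k * of_nat (m k) * nu S (n(h := n h - 1)) (m(k := m k - 1)))"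
        by (simp only: sum_colset pw) simp
      also have "\<dots> = I n m / K"
        using rowL[OF False] by (simp add: nuI sum_divide_distrib)
      finally show ?thesis using False by (simp add: nuI Inl bvec_def Nset_def)
    qed
  next
    case (Inr k)
    show ?thesis
    proof (cases "m k = 0")
      case True
      have "(\<Sum>c\<in>colset S n m. Amat S n m r c * tvec S n m c) = 0"
        using True by (auto simp: Inr colset_def SN_def Mset_def Amat_def intro!: sum.neutral)
      then show ?thesis using True by (simp add: Inr bvec_def Mset_def)
    next
      case False
      have pw: "(\<Sum>k'\<in>UNIV. if n h' \<noteq> 0 \<and> m k' \<noteq> 0 \<and> S $ h' $ k' \<noteq> 0 then Amat S n m r (h', k') * tvec S n m (h', k') else 0)
          = S $ h' $ k * of_nat (n h') * nu S (n(h' := n h' - 1)) (m(k := m k - 1))" for h'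
      proof -
        have "(\<Sum>k'\<in>UNIV. if n h' \<noteq> 0 \<and> m k' \<noteq> 0 \<and> S $ h' $ k' \<noteq> 0 then Amat S n m r (h', k') * tvec S n m (h', k') else 0)
          = (\<Sum>k'\<in>UNIV. if k' = k then S $ h' $ k * of_nat (n h') * nu S (n(h' := n h' - 1)) (m(k := m k - 1)) else 0)"
          using False by (intro sum.cong) (auto simp: Inr Amat_def tvec_def)
        then show ?thesis by simp
      qed
      have "(\<Sum>c\<in>colset S n m. Amat S n m r c * tvec S n m c) = (\<Sum>h'\<in>UNIV. S $ h' $ k * of_nat (n h') * nu S (n(h' := n h' - 1)) (m(k := m k - 1)))"
        by (simp only: sum_colset pw)
      also have "\<dots> = I n m / K"
        using rowR[OF False] by (simp add: nuI sum_divide_distrib)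
      finally show ?thesis using False by (simp add: nuI Inr bvec_def Mset_def)
    qed
  qed
  have part2: "(\<forall>c\<in>colset S n m. Amat S n m (Inl h) c = 0) \<and> bvec n m (Inl h) = 0" if "h \<notin> Nset n" for h
    using that by (auto simp: colset_def Amat_def bvec_def)
  have part3: "(\<forall>c\<in>colset S n m. Amat S n m (Inr k) c = 0) \<and> bvec n m (Inr k) = 0" if "k \<notin> Mset m" for k
    using that by (auto simp: colset_def SN_def Amat_def bvec_def)
  show ?thesis using part1 part2 part3 by blast
qed

end
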